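(* Let $k\subset K$ be a finite totally ramified Galois extension of complete discrete valuation fields with Galois group $G$ and degree $n$, and let $B\subset K[G]\setminus\{0\}$ be a finite graded-independent set. 1. Let $c:B\to k$ be a function which is not identically zero, and let $m=\min\{v(c_b)+d(b):\ b\in B,\ c_b\ne0\}$. Then $d(\sum_{b\in B}c_bb)=m$, and $\mathfrak p(\sum_{b\in B}c_bb)=\sum_{b}\lambda_b\,\mathfrak p(b)$, the sum over those $b\in B$ with $c_b\neq 0$ and $v(c_b)+d(b)=m$, for some nonzero $\lambda_b\in\bar k$. 2. For every $i\in\mathbb Z$, $\mathfrak C_i\cap\big(\bigoplus_{b\in B}k\cdot b\big)=\bigoplus_{b\in B}\pi_k^{\lfloor(i-d-d(b)-1)/n\rfloor+1}O_k\cdot b$. Moreover, if $B$ has exactly $n$ elements and $B\subset k[G]$, then $B$ is a graded base for $K/k$.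
   Context: $O_k$, $O_K$ are the rings of integers, $\pi_k$ a uniformizer of $k$, $\pi$ a uniformizer of $K$, $\bar k$ the residue field, $r:O_K\to\bar k$ reduction, $v$ the valuation of $K$ with $v(K^* )=\mathbb Z$, $d=v(\mathfrak D_{K/k})-n+1$ the ramification depth ($\mathfrak D_{K/k}$ the different), $c_\pi=\mathrm{Tr}_{K/k}(\pi^{-d})\in O_k^*$, $R=\bar k[X]/(X^n-1)$. $f=\sum a_\sigma\sigma\in K[G]$ acts on $K$ by $f(x)=\sum a_\sigma\sigma(x)$. $\mathfrak C_i=\{f\in K[G]: v(f(x))-v(x)\ge i\ \forall x\in K^*\}$. For $f\in\mathfrak C_i$, $p_i(f)=r(c_\pi)^{-1}\sum_{j=0}^{n-1}r(f(\pi^{j-i})/\pi^j)X^j\in R$. For $f\ne0$: $d(f)=i$ iff $f\in\mathfrak C_{i+d}\setminus\mathfrak C_{i+d+1}$, and $\mathfrak p(f)=p_{d(f)+d}(f)$. For $B\subset K[G]\setminus\{0\}$ and $s\in\mathbb Z$, $B_s=\{f\in B: d(f)\equiv s\bmod n\}$; $B$ is graded-independent if for every $s$ the family $(\mathfrak p(b))_{b\in B_s}$ is $\bar k$-linearly independent in $R$; $B$ is a graded base for $K/k$ if $B\subset k[G]$ is graded-independent and generates $k[G]$ as a $k$-vector space. *)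

theory Defs
  imports "HOL-Computational_Algebra.Polynomial"
begin

text \<open>The valuation v of K is a function on the whole field type; its value at 0 is
irrelevant (morally v 0 = infinity), so we use the predicate vge v x m, meaning v(x) is at least m.\<close>

definition vge :: "('K::field \<Rightarrow> int) \<Rightarrow> 'K \<Rightarrow> int \<Rightarrow> bool" where
  "vge v x m \<longleftrightarrow> x = 0 \<or> m \<le> v x"

definition OK :: "('K::field \<Rightarrow> int) \<Rightarrow> 'K set" where
  "OK v = {x. vge v x 0}"

definition is_dvf :: "('K::field \<Rightarrow> int) \<Rightarrow> bool" where
  "is_dvf v \<longleftrightarrow>
     (\<forall>x y. x \<noteq> 0 \<longrightarrow> y \<noteq> 0 \<longrightarrow> v (x * y) = v x + v y) \<and>
     (\<forall>x y. x \<noteq> 0 \<longrightarrow> y \<noteq> 0 \<longrightarrow> x + y \<noteq> 0 \<longrightarrow> min (v x) (v y) \<le> v (x + y)) \<and>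
     v ` (UNIV - {0}) = UNIV"

definition complete_wrt :: "('K::field \<Rightarrow> int) \<Rightarrow> 'K set \<Rightarrow> bool" where
  "complete_wrt v S \<longleftrightarrow>
     (\<forall>X::nat \<Rightarrow> 'K. (\<forall>j. X j \<in> S) \<and> (\<forall>M. \<exists>N. \<forall>a\<ge>N. \<forall>b\<ge>N. vge v (X a - X b) M)
          \<longrightarrow> (\<exists>L\<in>S. \<forall>M. \<exists>N. \<forall>a\<ge>N. vge v (X a - L) M))"

definition subfield :: "'K::field set \<Rightarrow> bool" where
  "subfield k \<longleftrightarrow> 0 \<in> k \<and> 1 \<in> k \<and>
     (\<forall>x\<in>k. \<forall>y\<in>k. x + y \<in> k \<and> x - y \<in> k \<and> x * y \<in> k) \<and>
     (\<forall>x\<in>k. inverse x \<in> k)"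

definition field_aut :: "('K::field \<Rightarrow> 'K) \<Rightarrow> bool" where
  "field_aut \<sigma> \<longleftrightarrow> bij \<sigma> \<and> \<sigma> 1 = 1 \<and>
     (\<forall>x y. \<sigma> (x + y) = \<sigma> x + \<sigma> y \<and> \<sigma> (x * y) = \<sigma> x * \<sigma> y)"

definition finite_galois :: "'K::field set \<Rightarrow> ('K \<Rightarrow> 'K) set \<Rightarrow> bool" where
  "finite_galois k G \<longleftrightarrow>
     G = {\<sigma>. field_aut \<sigma> \<and> (\<forall>x\<in>k. \<sigma> x = x)} \<and> finite G \<and>
     {x. \<forall>\<sigma>\<in>G. \<sigma> x = x} = k"

text \<open>The standing hyp: k inside K (K is the whole type), complete discrete valuation
fields, K/k finite Galois with group G of order n = card G, totally ramified
(ramification index [v(K*):v(k*)] = n), uniformizers pi of K and pik of k, and the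
reduction map r from O_K onto the residue field (a field type 'r), a ring
homomorphism O_K -> 'r, surjective, with kernel the maximal ideal.\<close>
definition tr_context ::
  "('K::field \<Rightarrow> int) \<Rightarrow> 'K set \<Rightarrow> ('K \<Rightarrow> 'K) set \<Rightarrow> 'K \<Rightarrow> 'K \<Rightarrow> ('K \<Rightarrow> 'r::field) \<Rightarrow> bool" where
  "tr_context v k G \<pi> \<pi>k r \<longleftrightarrow>
     is_dvf v \<and> complete_wrt v UNIV \<and> subfield k \<and> complete_wrt v k \<and>
     finite_galois k G \<and>
     v ` (k - {0}) = range (\<lambda>z. int (card G) * z) \<and>
     \<pi> \<noteq> 0 \<and> v \<pi> = 1 \<and> \<pi>k \<in> k \<and> \<pi>k \<noteq> 0 \<and> v \<pi>k = int (card G) \<and>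
     (\<forall>x\<in>OK v. \<forall>y\<in>OK v. r (x + y) = r x + r y \<and> r (x * y) = r x * r y) \<and>
     r 1 = 1 \<and> r ` OK v = UNIV \<and> (\<forall>x\<in>OK v. r x = 0 \<longleftrightarrow> vge v x 1)"

definition tr :: "('K::field \<Rightarrow> 'K) set \<Rightarrow> 'K \<Rightarrow> 'K" where
  "tr G x = (\<Sum>\<sigma>\<in>G. \<sigma> x)"

definition codiff :: "('K::field \<Rightarrow> int) \<Rightarrow> 'K set \<Rightarrow> ('K \<Rightarrow> 'K) set \<Rightarrow> 'K set" where
  "codiff v k G = {x. \<forall>y\<in>OK v. tr G (x * y) \<in> k \<inter> OK v}"

definition diffval :: "('K::field \<Rightarrow> int) \<Rightarrow> 'K set \<Rightarrow> ('K \<Rightarrow> 'K) set \<Rightarrow> int" where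
  "diffval v k G = (THE \<delta>. codiff v k G = {x. vge v x (- \<delta>)})"

definition depth :: "('K::field \<Rightarrow> int) \<Rightarrow> 'K set \<Rightarrow> ('K \<Rightarrow> 'K) set \<Rightarrow> int" where
  "depth v k G = diffval v k G - int (card G) + 1"

text \<open>Elements of K[G] are coefficient functions G -> K (zero outside G).\<close>
definition KG :: "('K::field \<Rightarrow> 'K) set \<Rightarrow> (('K \<Rightarrow> 'K) \<Rightarrow> 'K) set" where
  "KG G = {f. \<forall>\<sigma>. \<sigma> \<notin> G \<longrightarrow> f \<sigma> = 0}"

definition kG :: "'K::field set \<Rightarrow> ('K \<Rightarrow> 'K) set \<Rightarrow> (('K \<Rightarrow> 'K) \<Rightarrow> 'K) set" where
  "kG k G = {f \<in> KG G. \<forall>\<sigma>. f \<sigma> \<in> k}"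

definition act :: "('K::field \<Rightarrow> 'K) set \<Rightarrow> (('K \<Rightarrow> 'K) \<Rightarrow> 'K) \<Rightarrow> 'K \<Rightarrow> 'K" where
  "act G f x = (\<Sum>\<sigma>\<in>G. f \<sigma> * \<sigma> x)"

definition lincomb :: "(('K \<Rightarrow> 'K) \<Rightarrow> 'K) set \<Rightarrow> ((('K \<Rightarrow> 'K) \<Rightarrow> 'K) \<Rightarrow> 'K::field)
     \<Rightarrow> (('K \<Rightarrow> 'K) \<Rightarrow> 'K)" where
  "lincomb S c = (\<lambda>\<sigma>. \<Sum>b\<in>S. c b * b \<sigma>)"

definition kspan :: "'K::field set \<Rightarrow> (('K \<Rightarrow> 'K) \<Rightarrow> 'K) set \<Rightarrow> (('K \<Rightarrow> 'K) \<Rightarrow> 'K) set" where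
  "kspan k B = {lincomb S c | S c. finite S \<and> S \<subseteq> B \<and> (\<forall>b\<in>S. c b \<in> k)}"

definition CC :: "('K::field \<Rightarrow> int) \<Rightarrow> ('K \<Rightarrow> 'K) set \<Rightarrow> int \<Rightarrow> (('K \<Rightarrow> 'K) \<Rightarrow> 'K) set" where
  "CC v G i = {f \<in> KG G. \<forall>x. x \<noteq> 0 \<longrightarrow> vge v (act G f x) (v x + i)}"

definition cpi :: "('K::field \<Rightarrow> int) \<Rightarrow> 'K set \<Rightarrow> ('K \<Rightarrow> 'K) set \<Rightarrow> 'K \<Rightarrow> 'K" where
  "cpi v k G \<pi> = tr G (\<pi> powi (- depth v k G))"

text \<open>p_i(f) in R = kbar[X]/(X^n - 1), given by its representative of degree < n.\<close>
definition pp :: "('K::field \<Rightarrow> int) \<Rightarrow> 'K set \<Rightarrow> ('K \<Rightarrow> 'K) set \<Rightarrow> 'K \<Rightarrow> ('K \<Rightarrow> 'r::field)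
     \<Rightarrow> int \<Rightarrow> (('K \<Rightarrow> 'K) \<Rightarrow> 'K) \<Rightarrow> 'r poly" where
  "pp v k G \<pi> r i f = smult (inverse (r (cpi v k G \<pi>)))
     (\<Sum>j<card G. monom (r (act G f (\<pi> powi (int j - i)) / \<pi> ^ j)) j)"

definition dfun :: "('K::field \<Rightarrow> int) \<Rightarrow> 'K set \<Rightarrow> ('K \<Rightarrow> 'K) set
     \<Rightarrow> (('K \<Rightarrow> 'K) \<Rightarrow> 'K) \<Rightarrow> int" where
  "dfun v k G f = (THE i. f \<in> CC v G (i + depth v k G) \<and> f \<notin> CC v G (i + depth v k G + 1))"

definition frakp :: "('K::field \<Rightarrow> int) \<Rightarrow> 'K set \<Rightarrow> ('K \<Rightarrow> 'K) set \<Rightarrow> 'K \<Rightarrow> ('K \<Rightarrow> 'r::field)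
     \<Rightarrow> (('K \<Rightarrow> 'K) \<Rightarrow> 'K) \<Rightarrow> 'r poly" where
  "frakp v k G \<pi> r f = pp v k G \<pi> r (dfun v k G f + depth v k G) f"

definition R_eq :: "nat \<Rightarrow> 'r::field poly \<Rightarrow> 'r poly \<Rightarrow> bool" where
  "R_eq n p q \<longleftrightarrow> (monom 1 n - 1) dvd (p - q)"

definition Bs :: "('K::field \<Rightarrow> int) \<Rightarrow> 'K set \<Rightarrow> ('K \<Rightarrow> 'K) set
     \<Rightarrow> (('K \<Rightarrow> 'K) \<Rightarrow> 'K) set \<Rightarrow> int \<Rightarrow> (('K \<Rightarrow> 'K) \<Rightarrow> 'K) set" where
  "Bs v k G B s = {b \<in> B. dfun v k G b mod int (card G) = s mod int (card G)}"

definition graded_indep :: "('K::field \<Rightarrow> int) \<Rightarrow> 'K set \<Rightarrow> ('K \<Rightarrow> 'K) set \<Rightarrow> 'K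
     \<Rightarrow> ('K \<Rightarrow> 'r::field) \<Rightarrow> (('K \<Rightarrow> 'K) \<Rightarrow> 'K) set \<Rightarrow> bool" where
  "graded_indep v k G \<pi> r B \<longleftrightarrow>
     (\<forall>s::int. \<forall>S lam. finite S \<and> S \<subseteq> Bs v k G B s \<and>
        R_eq (card G) (\<Sum>b\<in>S. smult (lam b) (frakp v k G \<pi> r b)) 0
        \<longrightarrow> (\<forall>b\<in>S. lam b = 0))"

definition graded_base :: "('K::field \<Rightarrow> int) \<Rightarrow> 'K set \<Rightarrow> ('K \<Rightarrow> 'K) set \<Rightarrow> 'K
     \<Rightarrow> ('K \<Rightarrow> 'r::field) \<Rightarrow> (('K \<Rightarrow> 'K) \<Rightarrow> 'K) set \<Rightarrow> bool" where
  "graded_base v k G \<pi> r B \<longleftrightarrow>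
     B \<subseteq> kG k G \<and> graded_indep v k G \<pi> r B \<and> kspan k B = kG k G"

end

theory Submission
  imports Defs
begin



section \<open>Generic valuation facts\<close>

lemma subfield_closed:
  assumes "subfield F"
  shows "0 \<in> F" "1 \<in> F" "x \<in> F \<Longrightarrow> y \<in> F \<Longrightarrow> x + y \<in> F"
    "x \<in> F \<Longrightarrow> y \<in> F \<Longrightarrow> x - y \<in> F" "x \<in> F \<Longrightarrow> y \<in> F \<Longrightarrow> x * y \<in> F"
    "x \<in> F \<Longrightarrow> inverse x \<in> F"
  using assms unfolding subfield_def by auto

lemma subfield_uminus: "subfield F \<Longrightarrow> x \<in> F \<Longrightarrow> - x \<in> F"
  using subfield_closed(1)[of F] subfield_closed(4)[of F 0 x] by (metis diff_0)

lemma subfield_divide: "subfield F \<Longrightarrow> x \<in> F \<Longrightarrow> y \<in> F \<Longrightarrow> x / y \<in> F"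
  by (simp add: divide_inverse subfield_closed(5,6))

lemma subfield_sum: "subfield F \<Longrightarrow> (\<And>i. i \<in> S \<Longrightarrow> f i \<in> F) \<Longrightarrow> sum f S \<in> F"
  by (induction S rule: infinite_finite_induct) (auto intro: subfield_closed)

lemma subfield_power: "subfield F \<Longrightarrow> x \<in> F \<Longrightarrow> x ^ m \<in> F"
  by (induction m) (auto intro: subfield_closed)

lemma subfield_powi: "subfield F \<Longrightarrow> x \<in> F \<Longrightarrow> x powi m \<in> F"
  by (cases "m \<ge> 0") (auto simp: power_int_def subfield_power subfield_closed(6))

lemma subfield_UNIV: "subfield (UNIV :: 'a::field set)"
  by (simp add: subfield_def)

context
  fixes v :: "'K::field \<Rightarrow> int"
  assumes dvf: "is_dvf v"
begin

lemma vmult: "x \<noteq> 0 \<Longrightarrow> y \<noteq> 0 \<Longrightarrow> v (x * y) = v x + v y"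
  using dvf unfolding is_dvf_def by blast

lemma vadd: "x \<noteq> 0 \<Longrightarrow> y \<noteq> 0 \<Longrightarrow> x + y \<noteq> 0 \<Longrightarrow> min (v x) (v y) \<le> v (x + y)"
  using dvf unfolding is_dvf_def by blast

lemma v1: "v 1 = 0"
  using vmult[of 1 1] by simp

lemma vinv: "x \<noteq> 0 \<Longrightarrow> v (inverse x) = - v x"
  using vmult[of x "inverse x"] v1 by simp

lemma vminus1: "v (-1) = 0"
  using vmult[of "-1" "-1"] v1 by simp

lemma vminus: "v (- x) = v x"
proof (cases "x = 0")
  case False
  then show ?thesis using vmult[of "-1" x] vminus1 by simp
qed simp

lemma vdiv: "x \<noteq> 0 \<Longrightarrow> y \<noteq> 0 \<Longrightarrow> v (x / y) = v x - v y"
  by (simp add: divide_inverse vmult vinv)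

lemma vpow: "x \<noteq> 0 \<Longrightarrow> v (x ^ m) = int m * v x"
  by (induction m) (auto simp: v1 vmult algebra_simps)

lemma vpowi: "x \<noteq> 0 \<Longrightarrow> v (x powi m) = m * v x"
  by (cases "m \<ge> 0") (auto simp: power_int_def vpow vinv)

lemma vge_zero[simp]: "vge v 0 m"
  by (simp add: vge_def)

lemma vge_self: "vge v x (v x)"
  by (simp add: vge_def)

lemma vge_nz: "x \<noteq> 0 \<Longrightarrow> vge v x m \<longleftrightarrow> m \<le> v x"
  by (simp add: vge_def)

lemma vge_mono: "vge v x a \<Longrightarrow> b \<le> a \<Longrightarrow> vge v x b"
  by (auto simp: vge_def)

lemma vge_add: "vge v x m \<Longrightarrow> vge v y m \<Longrightarrow> vge v (x + y) m"
  unfolding vge_def using vadd[of x y] by fastforce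

lemma vge_uminus: "vge v (- x) m \<longleftrightarrow> vge v x m"
  by (simp add: vge_def vminus)

lemma vge_diff: "vge v x m \<Longrightarrow> vge v y m \<Longrightarrow> vge v (x - y) m"
  using vge_add[of x m "- y"] by (simp add: vge_uminus)

lemma vge_mult: "vge v x a \<Longrightarrow> vge v y b \<Longrightarrow> vge v (x * y) (a + b)"
  by (cases "x = 0"; cases "y = 0") (auto simp: vge_def vmult)

lemma vge_sum: "(\<And>i. i \<in> S \<Longrightarrow> vge v (f i) m) \<Longrightarrow> vge v (sum f S) m"
  by (induction S rule: infinite_finite_induct) (auto intro: vge_add)

lemma vge_mult_nz: "c \<noteq> 0 \<Longrightarrow> vge v (c * x) m \<longleftrightarrow> vge v x (m - v c)"
  by (cases "x = 0") (auto simp: vge_def vmult)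

lemma vge_div_nz: "c \<noteq> 0 \<Longrightarrow> vge v (x / c) m \<longleftrightarrow> vge v x (m + v c)"
  by (cases "x = 0") (auto simp: vge_def vdiv)

lemma vge_all_zero: assumes "\<And>m. vge v x m" shows "x = 0"
proof (rule ccontr)
  assume "x \<noteq> 0"
  moreover have "vge v x (v x + 1)" by (rule assms)
  ultimately show False by (simp add: vge_def)
qed

lemma v_add_small:
  assumes "x \<noteq> 0" "vge v y (v x + 1)"
  shows "x + y \<noteq> 0 \<and> v (x + y) = v x"
proof (cases "y = 0")
  case True then show ?thesis using assms by simp
next
  case False
  hence vy: "v x < v y" using assms by (simp add: vge_def)
  have ne: "x + y \<noteq> 0"
  proof
    assume "x + y = 0" hence "y = - x" by (metis add.commute add_eq_0_iff)
    then show False using vy vminus by simp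
  qed
  have "min (v x) (v y) \<le> v (x + y)" using vadd[OF assms(1) False ne] .
  hence a: "v x \<le> v (x + y)" using vy by simp
  have "x = (x + y) + (- y)" by simp
  hence "min (v (x + y)) (v (- y)) \<le> v x"
    using vadd[OF ne, of "- y"] False assms(1) by simp
  hence "v (x + y) \<le> v x" using vy vminus[of y] by linarith
  then show ?thesis using a ne by simp
qed

lemma sum_distinct_val:
  assumes fin: "finite S"
    and dist: "\<And>i j. i \<in> S \<Longrightarrow> j \<in> S \<Longrightarrow> i \<noteq> j \<Longrightarrow> z i \<noteq> 0 \<Longrightarrow> z j \<noteq> 0 \<Longrightarrow> v (z i) \<noteq> v (z j)"
    and ge: "vge v (sum z S) M"
    and jS: "j \<in> S"
  shows "vge v (z j) M"
proof (rule ccontr)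
  assume nj: "\<not> vge v (z j) M"
  let ?N = "{i \<in> S. z i \<noteq> 0}"
  have jN: "j \<in> ?N" using nj jS by (auto simp: vge_def)
  have finN: "finite ?N" using fin by simp
  define m0 where "m0 = Min ((\<lambda>i. v (z i)) ` ?N)"
  have "m0 \<in> (\<lambda>i. v (z i)) ` ?N"
    using Min_in[of "(\<lambda>i. v (z i)) ` ?N"] finN jN unfolding m0_def by blast
  then obtain i0 where i0: "i0 \<in> ?N" "v (z i0) = m0" by force
  have mle: "\<And>i. i \<in> ?N \<Longrightarrow> m0 \<le> v (z i)" unfolding m0_def using finN by auto
  have m0M: "m0 < M" using mle[OF jN] nj jN by (auto simp: vge_def)
  have rest: "vge v (sum z (S - {i0})) (v (z i0) + 1)"
  proof (rule vge_sum)
    fix i assume i: "i \<in> S - {i0}"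
    show "vge v (z i) (v (z i0) + 1)"
    proof (cases "z i = 0")
      case False
      hence "v (z i) \<noteq> v (z i0)" using dist[of i i0] i i0 by auto
      moreover have "m0 \<le> v (z i)" using mle i False by auto
      ultimately show ?thesis using i0 False by (auto simp: vge_def)
    qed simp
  qed
  have "sum z S = z i0 + sum z (S - {i0})"
    using fin i0(1) by (simp add: sum.remove)
  with v_add_small[OF _ rest] i0 have "sum z S \<noteq> 0" "v (sum z S) = m0" by auto
  then show False using ge m0M by (auto simp: vge_def)
qed

end




lemma lin_sys:
  fixes a :: "'e \<Rightarrow> 'j \<Rightarrow> 'a::field"
  assumes F: "subfield F" and finE: "finite E"
  shows "finite J \<Longrightarrow> card E < card J \<Longrightarrow> (\<forall>e\<in>E. \<forall>j\<in>J. a e j \<in> F) \<Longrightarrow>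
    \<exists>y. (\<forall>j\<in>J. y j \<in> F) \<and> (\<exists>j\<in>J. y j \<noteq> 0) \<and> (\<forall>e\<in>E. (\<Sum>j\<in>J. a e j * y j) = 0)"
  using finE
proof (induction E arbitrary: J a rule: finite_induct)
  case empty
  then obtain j0 where "j0 \<in> J" by fastforce
  then show ?case
    by (intro exI[of _ "\<lambda>j. if j = j0 then 1 else 0"]) (auto simp: subfield_closed[OF F])
next
  case (insert e E)
  show ?case
  proof (cases "\<forall>j\<in>J. a e j = 0")
    case True
    have "card E < card J" using insert by simp
    then obtain y where y: "(\<forall>j\<in>J. y j \<in> F)" "(\<exists>j\<in>J. y j \<noteq> 0)" "(\<forall>e\<in>E. (\<Sum>j\<in>J. a e j * y j) = 0)"
      using insert.IH[of J a] insert.prems by auto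
    then show ?thesis using True by (intro exI[of _ y]) auto
  next
    case False
    then obtain j0 where j0: "j0 \<in> J" "a e j0 \<noteq> 0" by auto
    define J' where "J' = J - {j0}"
    define a' where "a' = (\<lambda>e' j. a e' j - a e' j0 / a e j0 * a e j)"
    have finJ': "finite J'" using insert.prems unfolding J'_def by simp
    have cJ': "card E < card J'" using insert.prems j0 insert.hyps unfolding J'_def
      by (simp add: card_Diff_singleton)
    have aF: "\<forall>e'\<in>E. \<forall>j\<in>J'. a' e' j \<in> F" using insert.prems j0 unfolding a'_def J'_def
      by (auto intro!: subfield_closed[OF F] subfield_divide[OF F])
    obtain y' where y': "(\<forall>j\<in>J'. y' j \<in> F)" "(\<exists>j\<in>J'. y' j \<noteq> 0)"
        "(\<forall>e'\<in>E. (\<Sum>j\<in>J'. a' e' j * y' j) = 0)"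
      using insert.IH[OF finJ' cJ' aF] by blast
    define Se where "Se = (\<Sum>j\<in>J'. a e j * y' j)"
    define y where "y = (\<lambda>j. if j = j0 then - Se / a e j0 else y' j)"
    have split: "\<And>g. sum g J = g j0 + sum g J'"
      using insert.prems(1) j0 unfolding J'_def by (simp add: sum.remove)
    have yJ': "\<And>g. (\<Sum>j\<in>J'. g j * y j) = (\<Sum>j\<in>J'. g j * y' j)"
      unfolding y_def J'_def by (intro sum.cong) auto
    have SeF: "Se \<in> F" unfolding Se_def using insert.prems y'(1) unfolding J'_def
      by (intro subfield_sum[OF F]) (auto intro!: subfield_closed[OF F])
    have yF: "\<forall>j\<in>J. y j \<in> F" using y'(1) SeF insert.prems j0 unfolding y_def J'_def
      by (auto intro!: subfield_divide[OF F] subfield_uminus[OF F])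
    have ynz: "\<exists>j\<in>J. y j \<noteq> 0" using y'(2) unfolding y_def J'_def by auto
    have eqe: "(\<Sum>j\<in>J. a e j * y j) = 0"
    proof -
      have "(\<Sum>j\<in>J. a e j * y j) = a e j0 * y j0 + Se" by (simp add: split yJ' Se_def)
      then show ?thesis using j0 by (simp add: y_def)
    qed
    have eqE: "(\<Sum>j\<in>J. a e' j * y j) = 0" if e': "e' \<in> E" for e'
    proof -
      have "0 = (\<Sum>j\<in>J'. a' e' j * y' j)" using y'(3) e' by simp
      also have "\<dots> = (\<Sum>j\<in>J'. a e' j * y' j) - a e' j0 / a e j0 * Se"
        unfolding a'_def Se_def by (simp add: algebra_simps sum_subtractf sum_distrib_left)
      finally have "(\<Sum>j\<in>J'. a e' j * y' j) = a e' j0 / a e j0 * Se" by simp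
      moreover have "(\<Sum>j\<in>J. a e' j * y j) = a e' j0 * y j0 + (\<Sum>j\<in>J'. a e' j * y' j)"
        by (simp add: split yJ')
      ultimately show ?thesis using j0 by (simp add: y_def field_simps)
    qed
    show ?thesis using yF ynz eqe eqE by (intro exI[of _ y]) auto
  qed
qed




section \<open>Field automorphisms\<close>

context
  fixes \<sigma> :: "'a::field \<Rightarrow> 'a"
  assumes aut: "field_aut \<sigma>"
begin

lemma aut_add: "\<sigma> (x + y) = \<sigma> x + \<sigma> y" and aut_mult: "\<sigma> (x * y) = \<sigma> x * \<sigma> y"
  and aut_1: "\<sigma> 1 = 1" and aut_bij: "bij \<sigma>"
  using aut unfolding field_aut_def by auto

lemma aut_0: "\<sigma> 0 = 0"
  using aut_add[of 0 0] by (metis add.right_neutral add_left_cancel)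

lemma aut_minus: "\<sigma> (- x) = - \<sigma> x"
proof -
  have "\<sigma> x + \<sigma> (- x) = 0" using aut_add[of x "- x"] aut_0 by simp
  then show ?thesis by (rule minus_unique[symmetric])
qed

lemma aut_diff: "\<sigma> (x - y) = \<sigma> x - \<sigma> y"
  using aut_add[of x "- y"] aut_minus[of y] by simp

lemma aut_sum: "\<sigma> (sum f S) = (\<Sum>i\<in>S. \<sigma> (f i))"
  by (induction S rule: infinite_finite_induct) (auto simp: aut_0 aut_add)

lemma aut_power: "\<sigma> (x ^ m) = \<sigma> x ^ m"
  by (induction m) (auto simp: aut_1 aut_mult)

lemma aut_inj: "\<sigma> x = \<sigma> y \<Longrightarrow> x = y"
  using aut_bij by (simp add: bij_def inj_eq)

lemma aut_nz: "x \<noteq> 0 \<Longrightarrow> \<sigma> x \<noteq> 0"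
  using aut_inj[of x 0] aut_0 by auto

lemma aut_inverse: "\<sigma> (inverse x) = inverse (\<sigma> x)"
proof (cases "x = 0")
  case True then show ?thesis by (simp add: aut_0)
next
  case False
  have "\<sigma> x * \<sigma> (inverse x) = 1" using aut_mult[of x "inverse x"] False aut_1 by simp
  then show ?thesis by (metis inverse_unique)
qed

lemma aut_divide: "\<sigma> (x / y) = \<sigma> x / \<sigma> y"
  by (simp add: divide_inverse aut_mult aut_inverse)

lemma aut_powi: "\<sigma> (x powi m) = \<sigma> x powi m"
  by (cases "m \<ge> 0") (auto simp: power_int_def aut_power aut_inverse)

lemma aut_inv_aut: "field_aut (inv \<sigma>)"
proof -
  have s: "\<And>x. \<sigma> (inv \<sigma> x) = x" using aut_bij by (simp add: bij_is_surj surj_f_inv_f)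
  have i: "\<And>x. inv \<sigma> (\<sigma> x) = x" using aut_bij by (simp add: bij_is_inj inv_f_f)
  show ?thesis unfolding field_aut_def
  proof (intro conjI allI)
    show "bij (inv \<sigma>)" using aut_bij by (simp add: bij_imp_bij_inv)
    show "inv \<sigma> 1 = 1" using i[of 1] aut_1 by simp
    fix x y
    show "inv \<sigma> (x + y) = inv \<sigma> x + inv \<sigma> y"
      using aut_add[of "inv \<sigma> x" "inv \<sigma> y"] s i by metis
    show "inv \<sigma> (x * y) = inv \<sigma> x * inv \<sigma> y"
      using aut_mult[of "inv \<sigma> x" "inv \<sigma> y"] s i by metis
  qed
qed

end

lemma aut_comp: "field_aut \<sigma> \<Longrightarrow> field_aut \<tau> \<Longrightarrow> field_aut (\<sigma> \<circ> \<tau>)"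
  unfolding field_aut_def by (auto intro: bij_comp)

locale tctx =
  fixes v :: "'K::field \<Rightarrow> int" and k :: "'K set" and G :: "('K \<Rightarrow> 'K) set"
    and \<pi> \<pi>k :: 'K and r :: "'K \<Rightarrow> 'r::field"
  assumes hyp: "tr_context v k G \<pi> \<pi>k r"
begin

lemma dvf: "is_dvf v" using hyp unfolding tr_context_def by blast
lemma subk: "subfield k" using hyp unfolding tr_context_def by blast
lemma gal: "finite_galois k G" using hyp unfolding tr_context_def by blast
lemma finG: "finite G" using gal unfolding finite_galois_def by blast
lemma G_iff: "\<sigma> \<in> G \<longleftrightarrow> field_aut \<sigma> \<and> (\<forall>x\<in>k. \<sigma> x = x)"
  using gal unfolding finite_galois_def by blast
lemma G_aut: "\<sigma> \<in> G \<Longrightarrow> field_aut \<sigma>" using G_iff by blast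
lemma G_fix: "\<sigma> \<in> G \<Longrightarrow> x \<in> k \<Longrightarrow> \<sigma> x = x" using G_iff by blast
lemma fixed_k: "(\<And>\<sigma>. \<sigma> \<in> G \<Longrightarrow> \<sigma> x = x) \<Longrightarrow> x \<in> k"
  using gal unfolding finite_galois_def by blast
lemma id_G: "id \<in> G" using G_iff by (simp add: field_aut_def)
lemma G_comp: "\<sigma> \<in> G \<Longrightarrow> \<tau> \<in> G \<Longrightarrow> \<sigma> \<circ> \<tau> \<in> G"
  using G_iff aut_comp by fastforce
lemma G_inv: "\<sigma> \<in> G \<Longrightarrow> inv \<sigma> \<in> G"
proof -
  assume s: "\<sigma> \<in> G"
  have "\<And>x. x \<in> k \<Longrightarrow> inv \<sigma> x = x"
    using G_fix[OF s] aut_bij[OF G_aut[OF s]] by (metis bij_is_inj inv_f_f)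
  then show ?thesis using G_iff aut_inv_aut G_aut[OF s] by blast
qed
lemma G_surj: "\<sigma> \<in> G \<Longrightarrow> \<sigma> (inv \<sigma> x) = x"
  using aut_bij[OF G_aut] by (simp add: bij_is_surj surj_f_inv_f)
lemma cardG: "card G > 0" using finG id_G card_gt_0_iff by blast

lemma kval: "c \<in> k \<Longrightarrow> c \<noteq> 0 \<Longrightarrow> \<exists>t. v c = int (card G) * t"
  using hyp unfolding tr_context_def by blast
lemma pi_nz: "\<pi> \<noteq> 0" and v_pi: "v \<pi> = 1"
  using hyp unfolding tr_context_def by auto
lemma r_add: "x \<in> OK v \<Longrightarrow> y \<in> OK v \<Longrightarrow> r (x + y) = r x + r y"
  and r_mult: "x \<in> OK v \<Longrightarrow> y \<in> OK v \<Longrightarrow> r (x * y) = r x * r y"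
  and r_zero: "x \<in> OK v \<Longrightarrow> r x = 0 \<longleftrightarrow> vge v x 1"
  using hyp unfolding tr_context_def by auto

lemma OK_iff: "x \<in> OK v \<longleftrightarrow> vge v x 0" by (simp add: OK_def)

lemma r_sum: "(\<And>i. i \<in> S \<Longrightarrow> f i \<in> OK v) \<Longrightarrow> r (sum f S) = (\<Sum>i\<in>S. r (f i))"
proof (induction S rule: infinite_finite_induct)
  case (empty)
  have "r 0 = 0" using r_zero[of 0] by (simp add: OK_iff vge_def)
  then show ?case by simp
next
  case (infinite S)
  have "r 0 = 0" using r_zero[of 0] by (simp add: OK_iff vge_def)
  then show ?case using infinite by simp
next
  case (insert x F)
  have "sum f F \<in> OK v" using insert.prems by (auto simp: OK_iff intro!: vge_sum[OF dvf])
  then show ?case using insert by (simp add: r_add)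
qed

lemma v_powi_pi: "v (\<pi> powi m) = m" using vpowi[OF dvf pi_nz] v_pi by simp
lemma powi_pi_nz: "\<pi> powi m \<noteq> 0" using pi_nz by simp

section \<open>Artin's bound\<close>

lemma artin:
  fixes x :: "'j \<Rightarrow> 'K"
  assumes finJ: "finite J" and cJ: "card G < card J"
  shows "\<exists>c. (\<forall>j\<in>J. c j \<in> k) \<and> (\<exists>j\<in>J. c j \<noteq> 0) \<and> (\<Sum>j\<in>J. c j * x j) = 0"
proof -
  define Sol where "Sol = {y. (\<exists>j\<in>J. y j \<noteq> 0) \<and> (\<forall>\<sigma>\<in>G. (\<Sum>j\<in>J. \<sigma> (x j) * y j) = 0)}"
  define supp where "supp = (\<lambda>y::'j\<Rightarrow>'K. {j \<in> J. y j \<noteq> 0})"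
  obtain y0 where "y0 \<in> Sol"
    using lin_sys[OF subfield_UNIV finG finJ cJ, of "\<lambda>\<sigma> j. \<sigma> (x j)"] unfolding Sol_def by auto
  then obtain y where y: "y \<in> Sol" and ymin: "\<And>z. z \<in> Sol \<Longrightarrow> card (supp y) \<le> card (supp z)"
    using ex_has_least_nat[of "\<lambda>y. y \<in> Sol" y0 "\<lambda>y. card (supp y)"] by blast
  obtain j0 where j0: "j0 \<in> J" "y j0 \<noteq> 0" using y unfolding Sol_def by blast
  define y' where "y' = (\<lambda>j. y j / y j0)"
  have y'Sol: "y' \<in> Sol"
  proof -
    have "\<And>\<sigma>. \<sigma> \<in> G \<Longrightarrow> (\<Sum>j\<in>J. \<sigma> (x j) * y' j) = (\<Sum>j\<in>J. \<sigma> (x j) * y j) / y j0"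
      unfolding y'_def by (simp add: sum_divide_distrib)
    then show ?thesis using y j0 unfolding Sol_def y'_def by auto
  qed
  have supp': "supp y' = supp y" using j0 unfolding supp_def y'_def by auto
  have y'j0: "y' j0 = 1" using j0 unfolding y'_def by simp
  have fixy: "\<tau> (y' j) = y' j" if \<tau>: "\<tau> \<in> G" and j: "j \<in> J" for \<tau> j
  proof (rule ccontr)
    assume ne: "\<tau> (y' j) \<noteq> y' j"
    define z where "z = (\<lambda>j. y' j - \<tau> (y' j))"
    have aut: "field_aut \<tau>" using G_aut[OF \<tau>] .
    have zeq: "(\<Sum>j\<in>J. \<sigma> (x j) * z j) = 0" if \<sigma>: "\<sigma> \<in> G" for \<sigma>
    proof -
      have g: "inv \<tau> \<circ> \<sigma> \<in> G" using G_comp[OF G_inv[OF \<tau>] \<sigma>] .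
      have "(\<Sum>j\<in>J. \<sigma> (x j) * \<tau> (y' j)) = \<tau> (\<Sum>j\<in>J. (inv \<tau> \<circ> \<sigma>) (x j) * y' j)"
        by (simp add: aut_sum[OF aut] aut_mult[OF aut] G_surj[OF \<tau>])
      also have "\<dots> = 0" using y'Sol g aut_0[OF aut] unfolding Sol_def by auto
      finally show ?thesis using y'Sol \<sigma> unfolding z_def Sol_def
        by (simp add: algebra_simps sum_subtractf)
    qed
    have "z j \<noteq> 0" using ne unfolding z_def by simp
    then have zSol: "z \<in> Sol" using zeq j unfolding Sol_def by auto
    have "supp z \<subseteq> supp y' - {j0}"
      using aut_0[OF aut] aut_1[OF aut] y'j0 unfolding supp_def z_def by auto
    hence "supp z \<subset> supp y'" using j0 supp' unfolding supp_def by auto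
    hence "card (supp z) < card (supp y)" using supp' finJ unfolding supp_def
      by (metis (no_types, lifting) finite_subset mem_Collect_eq psubset_card_mono subsetI)
    then show False using ymin[OF zSol] by simp
  qed
  have ck: "\<forall>j\<in>J. y' j \<in> k" using fixy fixed_k by blast
  have "(\<Sum>j\<in>J. id (x j) * y' j) = 0" using y'Sol id_G unfolding Sol_def by blast
  then show ?thesis using ck j0 y'j0
    by (intro exI[of _ y']) (auto simp: mult.commute intro!: bexI[of _ j0])
qed

end




lemma mod_eq_small:
  fixes n t s i j :: int
  assumes "0 \<le> i" "i < n" "0 \<le> j" "j < n" "n * t + i = n * s + j"
  shows "i = j"
proof -
  have "i mod n = i" using assms by simp
  moreover have "j mod n = j" using assms by simp
  moreover have "(i + n * t) mod n = i mod n" by simp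
  moreover have "(j + n * s) mod n = j mod n" by simp
  ultimately show ?thesis using assms(5) by (metis add.commute)
qed

context tctx begin

lemma vge0[simp]: "vge v 0 m" by (simp add: vge_def)

lemma v_pow_pi: "v (\<pi> ^ j) = int j" using vpow[OF dvf pi_nz] v_pi by simp

lemma basis_terms:
  assumes dk: "\<forall>j<card G. d j \<in> k"
    and ge: "vge v (\<Sum>j<card G. d j * \<pi> powi (int j + a)) M"
    and j: "j < card G"
  shows "vge v (d j * \<pi> powi (int j + a)) M"
proof (rule sum_distinct_val[OF dvf _ _ ge])
  show "j \<in> {..<card G}" using j by simp
  fix i l assume i: "i \<in> {..<card G}" and l: "l \<in> {..<card G}" and il: "i \<noteq> l"
    and nzi: "d i * \<pi> powi (int i + a) \<noteq> 0" and nzl: "d l * \<pi> powi (int l + a) \<noteq> 0"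
  have di: "d i \<noteq> 0" "d i \<in> k" using nzi dk i by auto
  have dl: "d l \<noteq> 0" "d l \<in> k" using nzl dk l by auto
  obtain t where t: "v (d i) = int (card G) * t" using kval di by blast
  obtain s where s: "v (d l) = int (card G) * s" using kval dl by blast
  show "v (d i * \<pi> powi (int i + a)) \<noteq> v (d l * \<pi> powi (int l + a))"
  proof
    assume "v (d i * \<pi> powi (int i + a)) = v (d l * \<pi> powi (int l + a))"
    moreover have "v (d i * \<pi> powi (int i + a)) = v (d i) + (int i + a)"
      using vmult[OF dvf di(1) powi_pi_nz[of "int i + a"]] v_powi_pi[of "int i + a"] by simp
    moreover have "v (d l * \<pi> powi (int l + a)) = v (d l) + (int l + a)"
      using vmult[OF dvf dl(1) powi_pi_nz[of "int l + a"]] v_powi_pi[of "int l + a"] by simp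
    ultimately have "int (card G) * t + int i = int (card G) * s + int l"
      using t s by simp
    hence "int i = int l" using i l mod_eq_small[of "int i" "int (card G)" "int l" t s] by auto
    then show False using il by simp
  qed
qed simp

lemma basis_indep:
  assumes dk: "\<forall>j<card G. d j \<in> k"
    and z: "(\<Sum>j<card G. d j * \<pi> powi (int j + a)) = 0"
    and j: "j < card G"
  shows "d j = 0"
proof -
  have "\<And>M. vge v (d j * \<pi> powi (int j + a)) M"
    using basis_terms[OF dk _ j] z by (simp add: vge_def)
  hence "d j * \<pi> powi (int j + a) = 0" by (rule vge_all_zero[OF dvf])
  then show ?thesis using pi_nz by simp
qed

lemma basis_rep:
  "\<exists>d. (\<forall>j<card G. d j \<in> k) \<and> x = (\<Sum>j<card G. d j * \<pi> powi (int j + a))"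
proof -
  define n where "n = card G"
  define xx where "xx = (\<lambda>j. if j = n then x else \<pi> powi (int j + a))"
  obtain c where c: "\<forall>j\<in>{..n}. c j \<in> k" "\<exists>j\<in>{..n}. c j \<noteq> 0"
      "(\<Sum>j\<in>{..n}. c j * xx j) = 0"
    using artin[of "{..n}" xx] unfolding n_def by auto
  have s: "(\<Sum>j\<in>{..n}. c j * xx j) = (\<Sum>j<n. c j * \<pi> powi (int j + a)) + c n * x"
    unfolding xx_def lessThan_Suc_atMost[symmetric] by simp
  have ck: "\<forall>j<card G. c j \<in> k" using c(1) unfolding n_def by auto
  have cn: "c n \<noteq> 0"
  proof
    assume "c n = 0"
    hence "(\<Sum>j<card G. c j * \<pi> powi (int j + a)) = 0" using c(3) s unfolding n_def by simp
    hence "\<forall>j<card G. c j = 0" using basis_indep[OF ck] by blast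
    then show False using c(2) \<open>c n = 0\<close> unfolding n_def by (auto simp: le_less)
  qed
  define d where "d = (\<lambda>j. - c j / c n)"
  have "x = (\<Sum>j<n. d j * \<pi> powi (int j + a))"
  proof -
    have "c n * x = - (\<Sum>j<n. c j * \<pi> powi (int j + a))" using c(3) s by (simp add: eq_neg_iff_add_eq_0 add.commute)
    hence "x = - (\<Sum>j<n. c j * \<pi> powi (int j + a)) / c n" using cn by (simp add: field_simps)
    also have "\<dots> = (\<Sum>j<n. d j * \<pi> powi (int j + a))"
      unfolding d_def by (simp add: sum_divide_distrib sum_negf[symmetric])
    finally show ?thesis .
  qed
  moreover have "\<forall>j<card G. d j \<in> k" using ck c(1) cn unfolding d_def n_def
    by (auto intro!: subfield_divide[OF subk] subfield_uminus[OF subk])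
  ultimately show ?thesis unfolding n_def by blast
qed

end




context tctx begin

lemma sigma_lower:
  assumes s: "\<sigma> \<in> G"
  shows "\<exists>C\<ge>0. \<forall>x. x \<noteq> 0 \<longrightarrow> v x - C \<le> v (\<sigma> x)"
proof -
  have aut: "field_aut \<sigma>" using G_aut[OF s] .
  define L where "L = Min ((\<lambda>j. v (\<sigma> (\<pi> powi (int j)))) ` {..<card G})"
  have Lle: "\<And>j. j < card G \<Longrightarrow> L \<le> v (\<sigma> (\<pi> powi (int j)))" unfolding L_def by simp
  define C where "C = max 0 (int (card G) - 1 - L)"
  have "v x - C \<le> v (\<sigma> x)" if x: "x \<noteq> 0" for x
  proof -
    obtain d where d: "\<forall>j<card G. d j \<in> k" "x = (\<Sum>j<card G. d j * \<pi> powi (int j + 0))"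
      using basis_rep[of x 0] by blast
    have sx: "vge v (\<Sum>j<card G. d j * \<pi> powi (int j + 0)) (v x)"
      using vge_self[OF dvf, of x] d(2) by simp
    have bt: "vge v (d j * \<pi> powi (int j + 0)) (v x)" if "j < card G" for j
      using basis_terms[OF d(1) sx that] .
    have "vge v (\<sigma> x) (v x - (int (card G) - 1) + L)"
    proof -
      have "\<sigma> x = (\<Sum>j<card G. d j * \<sigma> (\<pi> powi (int j)))"
        using d by (simp add: aut_sum[OF aut] aut_mult[OF aut] G_fix[OF s])
      also have "vge v \<dots> (v x - (int (card G) - 1) + L)"
      proof (rule vge_sum[OF dvf])
        fix j assume j: "j \<in> {..<card G}"
        show "vge v (d j * \<sigma> (\<pi> powi (int j))) (v x - (int (card G) - 1) + L)"
        proof (cases "d j = 0")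
          case False
          have "vge v (d j) (v x - (int (card G) - 1))"
            using bt[of j] j False pi_nz by (auto simp: vge_def vmult[OF dvf] v_powi_pi v_pow_pi)
          moreover have "vge v (\<sigma> (\<pi> powi (int j))) L" using Lle[of j] j by (simp add: vge_def)
          ultimately show ?thesis by (rule vge_mult[OF dvf])
        qed simp
      qed
      finally show ?thesis .
    qed
    then show ?thesis using aut_nz[OF aut x] unfolding C_def by (simp add: vge_def)
  qed
  moreover have "C \<ge> 0" unfolding C_def by simp
  ultimately show ?thesis by blast
qed

lemma sigma_ge:
  assumes s: "\<sigma> \<in> G" and x: "x \<noteq> 0"
  shows "v x \<le> v (\<sigma> x)"
proof -
  have aut: "field_aut \<sigma>" using G_aut[OF s] .
  obtain C where C: "C \<ge> 0" "\<And>x. x \<noteq> 0 \<Longrightarrow> v x - C \<le> v (\<sigma> x)" using sigma_lower[OF s] by blast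
  define m where "m = nat C + 1"
  have "v (x ^ m) - C \<le> v (\<sigma> (x ^ m))" using C(2)[of "x ^ m"] x by simp
  hence "int m * v x - C \<le> int m * v (\<sigma> x)"
    using x aut_nz[OF aut x] by (simp add: aut_power[OF aut] vpow[OF dvf])
  hence le: "int m * (v x - v (\<sigma> x)) \<le> C" by (simp add: algebra_simps)
  have im: "int m = C + 1" unfolding m_def using C(1) by simp
  show ?thesis
  proof (rule ccontr)
    assume "\<not> ?thesis"
    hence "1 \<le> v x - v (\<sigma> x)" by simp
    hence "(C + 1) * 1 \<le> (C + 1) * (v x - v (\<sigma> x))" using C(1) by (intro mult_left_mono) auto
    moreover have "(C + 1) * (v x - v (\<sigma> x)) \<le> C" using le im by simp
    ultimately have "(C + 1) * 1 \<le> C" by (rule order_trans)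
    then show False by simp
  qed
qed

lemma sigma_v:
  assumes s: "\<sigma> \<in> G" and x: "x \<noteq> 0"
  shows "v (\<sigma> x) = v x"
proof -
  have aut: "field_aut \<sigma>" using G_aut[OF s] .
  have "v (\<sigma> x) \<le> v (inv \<sigma> (\<sigma> x))" using sigma_ge[OF G_inv[OF s] aut_nz[OF aut x]] .
  also have "inv \<sigma> (\<sigma> x) = x" using aut_bij[OF aut] by (simp add: bij_is_inj inv_f_f)
  finally show ?thesis using sigma_ge[OF s x] by simp
qed

lemma residue:
  assumes x: "x \<in> OK v"
  shows "\<exists>e\<in>k. e \<in> OK v \<and> vge v (x - e) 1"
proof -
  obtain d where d: "\<forall>j<card G. d j \<in> k" "x = (\<Sum>j<card G. d j * \<pi> powi (int j + 0))"
    using basis_rep[of x 0] by blast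
  have sx: "vge v (\<Sum>j<card G. d j * \<pi> powi (int j + 0)) 0" using d(2) x by (simp add: OK_iff)
  have bt: "vge v (d j * \<pi> powi (int j + 0)) 0" if "j < card G" for j
    using basis_terms[OF d(1) sx that] .
  have "0 \<in> {..<card G}" using cardG by simp
  hence xs: "x = d 0 + (\<Sum>j\<in>{..<card G} - {0}. d j * \<pi> powi (int j))"
    using d(2) by (simp add: sum.remove)
  have rest: "vge v (\<Sum>j\<in>{..<card G} - {0}. d j * \<pi> powi (int j)) 1"
  proof (rule vge_sum[OF dvf])
    fix j assume j: "j \<in> {..<card G} - {0}"
    show "vge v (d j * \<pi> powi (int j)) 1"
    proof (cases "d j = 0")
      case False
      obtain t where t: "v (d j) = int (card G) * t" using kval d(1) j False by blast
      have "0 \<le> int (card G) * t + int j" using bt[of j] j False t pi_nz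
        by (auto simp: vge_def vmult[OF dvf] v_powi_pi v_pow_pi)
      hence "t \<ge> 0"
      proof -
        assume h: "0 \<le> int (card G) * t + int j"
        show "t \<ge> 0"
        proof (rule ccontr)
          assume "\<not> t \<ge> 0" hence "t \<le> -1" by simp
          hence "int (card G) * t \<le> int (card G) * (-1)" by (intro mult_left_mono) auto
          then show False using h j by simp
        qed
      qed
      hence "v (d j) \<ge> 0" using t by simp
      then show ?thesis using j False pi_nz by (auto simp: vge_def vmult[OF dvf] v_powi_pi v_pow_pi)
    qed simp
  qed
  have d0: "vge v (d 0) 0" using bt[of 0] cardG by simp
  have "x - d 0 = (\<Sum>j\<in>{..<card G} - {0}. d j * \<pi> powi (int j))"
    using xs by (simp add: algebra_simps)
  hence "vge v (x - d 0) 1" using rest by simp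
  moreover have "d 0 \<in> k" using d(1) cardG by simp
  ultimately show ?thesis using d0 unfolding OK_iff by blast
qed

end




context tctx begin

lemma act_lincomb: "finite S \<Longrightarrow> act G (lincomb S c) x = (\<Sum>b\<in>S. c b * act G b x)"
  unfolding act_def lincomb_def
  by (simp add: sum_distrib_right sum_distrib_left mult.assoc sum.swap[of _ G S])

lemma act_scal_x: "c \<in> k \<Longrightarrow> act G f (c * y) = c * act G f y"
  unfolding act_def
  by (simp add: sum_distrib_left aut_mult[OF G_aut] G_fix algebra_simps)

lemma act_add_x: "act G f (y + z) = act G f y + act G f z"
  unfolding act_def by (simp add: aut_add[OF G_aut] algebra_simps sum.distrib)

lemma act_zero_f: "act G (\<lambda>_. 0) x = 0"
  unfolding act_def by simp

lemma zero_KG: "(\<lambda>_. 0) \<in> KG G" by (simp add: KG_def)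

lemma zero_CC: "(\<lambda>_. 0) \<in> CC v G i"
  unfolding CC_def using zero_KG act_zero_f by simp

lemma CC_mono: "i \<le> j \<Longrightarrow> f \<in> CC v G j \<Longrightarrow> f \<in> CC v G i"
  unfolding CC_def by (auto intro: vge_mono[OF dvf])

lemma CC_KG: "f \<in> CC v G i \<Longrightarrow> f \<in> KG G" unfolding CC_def by simp

lemma CC_act: "f \<in> CC v G i \<Longrightarrow> x \<noteq> 0 \<Longrightarrow> vge v (act G f x) (v x + i)"
  unfolding CC_def by simp

lemma CC_lower:
  assumes f: "f \<in> KG G"
  shows "\<exists>i. f \<in> CC v G i"
proof -
  define i0 where "i0 = Min (insert 0 ((\<lambda>\<sigma>. v (f \<sigma>)) ` {\<sigma>\<in>G. f \<sigma> \<noteq> 0}))"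
  have le: "\<And>\<sigma>. \<sigma> \<in> G \<Longrightarrow> f \<sigma> \<noteq> 0 \<Longrightarrow> i0 \<le> v (f \<sigma>)"
    unfolding i0_def using finG by (intro Min_le) auto
  have "f \<in> CC v G i0"
    unfolding CC_def
  proof (intro CollectI conjI allI impI)
    show "f \<in> KG G" by fact
    fix x :: 'K assume x: "x \<noteq> 0"
    show "vge v (act G f x) (v x + i0)"
      unfolding act_def
    proof (rule vge_sum[OF dvf])
      fix \<sigma> assume s: "\<sigma> \<in> G"
      show "vge v (f \<sigma> * \<sigma> x) (v x + i0)"
      proof (cases "f \<sigma> = 0")
        case False
        have "vge v (f \<sigma> * \<sigma> x) (i0 + v x)"
          using le[OF s False] sigma_v[OF s x] by (intro vge_mult[OF dvf]) (auto simp: vge_def)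
        then show ?thesis by (simp add: add.commute)
      qed simp
    qed
  qed
  then show ?thesis by blast
qed

lemma dfun_eq:
  assumes "f \<in> CC v G (i + depth v k G)" "f \<notin> CC v G (i + depth v k G + 1)"
  shows "dfun v k G f = i"
  unfolding dfun_def
proof (rule the_equality)
  show "f \<in> CC v G (i + depth v k G) \<and> f \<notin> CC v G (i + depth v k G + 1)" using assms by simp
  fix i' assume h: "f \<in> CC v G (i' + depth v k G) \<and> f \<notin> CC v G (i' + depth v k G + 1)"
  show "i' = i"
  proof (rule ccontr)
    assume "i' \<noteq> i"
    hence "i' < i \<or> i < i'" by auto
    then show False
    proof
      assume "i' < i"
      then show False using h assms CC_mono[of "i' + depth v k G + 1" "i + depth v k G" f] by auto
    next
      assume "i < i'"
      then show False using h assms CC_mono[of "i + depth v k G + 1" "i' + depth v k G" f] by auto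
    qed
  qed
qed

definition Acoef :: "int \<Rightarrow> (('K \<Rightarrow> 'K) \<Rightarrow> 'K) \<Rightarrow> nat \<Rightarrow> 'K" where
  "Acoef i f j = act G f (\<pi> powi (int j - i)) / \<pi> ^ j"

lemma pp_Acoef: "pp v k G \<pi> r i f = smult (inverse (r (cpi v k G \<pi>)))
     (\<Sum>j<card G. monom (r (Acoef i f j)) j)"
  unfolding pp_def Acoef_def ..

lemma Acoef_ge:
  assumes "f \<in> CC v G (i + e)"
  shows "vge v (Acoef i f j) e"
proof -
  have "vge v (act G f (\<pi> powi (int j - i))) (v (\<pi> powi (int j - i)) + (i + e))"
    using CC_act[OF assms powi_pi_nz] .
  hence "vge v (act G f (\<pi> powi (int j - i))) (e + v (\<pi> ^ j))"
    by (simp add: v_powi_pi v_pow_pi add.commute)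
  then show ?thesis unfolding Acoef_def using pi_nz by (simp add: vge_div_nz[OF dvf])
qed

lemma Acoef_OK: "f \<in> CC v G i \<Longrightarrow> Acoef i f j \<in> OK v"
  using Acoef_ge[of f i 0 j] by (simp add: OK_iff)

lemma r_vanish: "vge v x 1 \<Longrightarrow> r x = 0"
  using r_zero[of x] vge_mono[OF dvf, of x 1 0] by (simp add: OK_iff)

lemma pp_zero:
  assumes "f \<in> CC v G (i + 1)"
  shows "pp v k G \<pi> r i f = 0"
proof -
  have "\<And>j. r (Acoef i f j) = 0" using Acoef_ge[OF assms] r_vanish by blast
  then show ?thesis unfolding pp_Acoef by simp
qed

end

locale tctxB = tctx v k G \<pi> \<pi>k r
  for v :: "'K::field \<Rightarrow> int" and k G \<pi> \<pi>k and r :: "'K \<Rightarrow> 'r::field" +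
  fixes B :: "(('K \<Rightarrow> 'K) \<Rightarrow> 'K) set"
  assumes finB: "finite B"
    and Bsub: "B \<subseteq> KG G - {\<lambda>_. 0}"
    and indep: "graded_indep v k G \<pi> r B"
begin

lemma indepD:
  assumes "finite S" "S \<subseteq> Bs v k G B s"
    "R_eq (card G) (\<Sum>b\<in>S. smult (lam b) (frakp v k G \<pi> r b)) 0" "b \<in> S"
  shows "lam b = 0"
  using indep assms unfolding graded_indep_def by blast

lemma dfunB:
  assumes b: "b \<in> B"
  shows "b \<in> CC v G (dfun v k G b + depth v k G) \<and> b \<notin> CC v G (dfun v k G b + depth v k G + 1)"
proof -
  have bKG: "b \<in> KG G" using b Bsub by auto
  obtain i0 where i0: "b \<in> CC v G i0" using CC_lower[OF bKG] by blast
  have "\<exists>i. b \<in> CC v G i \<and> b \<notin> CC v G (i + 1)"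
  proof (rule ccontr)
    assume "\<not> ?thesis"
    hence step: "\<And>i. b \<in> CC v G i \<Longrightarrow> b \<in> CC v G (i + 1)" by blast
    have up: "b \<in> CC v G (i0 + int m)" for m
    proof (induction m)
      case (Suc m)
      have "i0 + int (Suc m) = i0 + int m + 1" by simp
      then show ?case using step[of "i0 + int m"] Suc by metis
    qed (use i0 in simp)
    have all: "b \<in> CC v G i" for i
    proof (cases "i \<le> i0")
      case True then show ?thesis using CC_mono i0 by blast
    next
      case False
      then show ?thesis using up[of "nat (i - i0)"] by simp
    qed
    have fz: "frakp v k G \<pi> r b = 0"
      unfolding frakp_def using pp_zero all by blast
    have "(1::'r) = 0"
    proof (rule indepD[of "{b}" "dfun v k G b" "\<lambda>_. 1" b])
      show "{b} \<subseteq> Bs v k G B (dfun v k G b)" using b unfolding Bs_def by auto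
      show "R_eq (card G) (\<Sum>b\<in>{b}. smult 1 (frakp v k G \<pi> r b)) 0"
        using fz by (simp add: R_eq_def)
    qed auto
    then show False by simp
  qed
  then obtain i where i: "b \<in> CC v G i" "b \<notin> CC v G (i + 1)" by blast
  have "dfun v k G b = i - depth v k G" using i by (intro dfun_eq) auto
  then show ?thesis using i by simp
qed

end




lemma poly_combine:
  fixes lam :: "'b \<Rightarrow> 'r::field"
  shows "smult c (\<Sum>j<n. monom (\<Sum>b\<in>S. lam b * a b j) j) =
    (\<Sum>b\<in>S. smult (lam b) (smult c (\<Sum>j<n. monom (a b j) j)))"
  by (rule poly_eqI) (simp add: coeff_sum sum_distrib_left algebra_simps if_distrib[of "\<lambda>x. _ * x"] sum.delta cong: if_cong)

context tctx begin

lemma act_zero_x: "act G f 0 = 0"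
  unfolding act_def by (simp add: aut_0[OF G_aut])

lemma lincomb_KG: "finite S \<Longrightarrow> S \<subseteq> KG G \<Longrightarrow> lincomb S c \<in> KG G"
proof -
  assume S: "S \<subseteq> KG G"
  have "\<And>\<sigma> b. \<sigma> \<notin> G \<Longrightarrow> b \<in> S \<Longrightarrow> b \<sigma> = 0" using S unfolding KG_def by blast
  then show ?thesis unfolding KG_def lincomb_def by (auto intro!: sum.neutral)
qed

end

context tctxB begin

lemma part1:
  fixes c :: "(('K \<Rightarrow> 'K) \<Rightarrow> 'K) \<Rightarrow> 'K"
  assumes ck: "\<forall>b\<in>B. c b \<in> k" and nz: "\<exists>b\<in>B. c b \<noteq> 0"
  defines "m \<equiv> Min {v (c b) + dfun v k G b | b. b \<in> B \<and> c b \<noteq> 0}"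
  defines "B' \<equiv> {b \<in> B. c b \<noteq> 0 \<and> v (c b) + dfun v k G b = m}"
  shows "lincomb B c \<noteq> (\<lambda>_. 0) \<and> dfun v k G (lincomb B c) = m \<and>
     (\<exists>lam::(('K \<Rightarrow> 'K) \<Rightarrow> 'K) \<Rightarrow> 'r. (\<forall>b\<in>B'. lam b \<noteq> 0) \<and>
        R_eq (card G) (frakp v k G \<pi> r (lincomb B c))
           (\<Sum>b\<in>B'. smult (lam b) (frakp v k G \<pi> r b))) \<and>
     lincomb B c \<notin> CC v G (m + depth v k G + 1)"
proof -
  define D where "D = depth v k G"
  define F where "F = lincomb B c"
  define Ms where "Ms = {v (c b) + dfun v k G b | b. b \<in> B \<and> c b \<noteq> 0}"
  have Ms_img: "Ms = (\<lambda>b. v (c b) + dfun v k G b) ` {b \<in> B. c b \<noteq> 0}" unfolding Ms_def by auto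
  have finMs: "finite Ms" unfolding Ms_img using finB by simp
  have neMs: "Ms \<noteq> {}" unfolding Ms_img using nz by auto
  have m_le: "\<And>b. b \<in> B \<Longrightarrow> c b \<noteq> 0 \<Longrightarrow> m \<le> v (c b) + dfun v k G b"
    unfolding m_def Ms_def[symmetric] using finMs by (intro Min_le) (auto simp: Ms_def)
  have "m \<in> Ms" unfolding m_def Ms_def[symmetric] using finMs neMs by (rule Min_in)
  then obtain b0 where b0: "b0 \<in> B'" unfolding Ms_def B'_def by auto
  have B'B: "B' \<subseteq> B" unfolding B'_def by auto
  have finB': "finite B'" using finB B'B finite_subset by blast
  have BKG: "B \<subseteq> KG G" using Bsub by auto
  have dB: "\<And>b. b \<in> B \<Longrightarrow> b \<in> CC v G (dfun v k G b + D)" using dfunB unfolding D_def by blast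
  have FCC: "F \<in> CC v G (m + D)"
    unfolding CC_def
  proof (intro CollectI conjI allI impI)
    show "F \<in> KG G" unfolding F_def using finB BKG by (rule lincomb_KG)
    fix x :: 'K assume x: "x \<noteq> 0"
    show "vge v (act G F x) (v x + (m + D))"
      unfolding F_def act_lincomb[OF finB]
    proof (rule vge_sum[OF dvf])
      fix b assume b: "b \<in> B"
      show "vge v (c b * act G b x) (v x + (m + D))"
      proof (cases "c b = 0")
        case False
        have "vge v (c b * act G b x) (v (c b) + (v x + (dfun v k G b + D)))"
          using CC_act[OF dB[OF b] x] by (intro vge_mult[OF dvf]) (simp_all add: vge_self[OF dvf])
        then show ?thesis by (rule vge_mono[OF dvf]) (use m_le[OF b False] in linarith)
      qed simp
    qed
  qed
  define u where "u = (\<lambda>b. c b * \<pi> powi (- v (c b)))"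
  have u_v: "\<And>b. c b \<noteq> 0 \<Longrightarrow> u b \<noteq> 0 \<and> v (u b) = 0"
    unfolding u_def using pi_nz by (simp add: vmult[OF dvf] v_powi_pi)
  have u_OK: "\<And>b. c b \<noteq> 0 \<Longrightarrow> u b \<in> OK v"
    using u_v by (simp add: OK_iff vge_def)
  define e where "e = (\<lambda>b. SOME e. e \<in> k \<and> e \<in> OK v \<and> vge v (u b - e) 1)"
  have e_prop: "\<And>b. c b \<noteq> 0 \<Longrightarrow> e b \<in> k \<and> e b \<in> OK v \<and> vge v (u b - e b) 1"
  proof -
    fix b assume "c b \<noteq> 0"
    then obtain e' where "e' \<in> k" "e' \<in> OK v" "vge v (u b - e') 1" using residue[OF u_OK] by blast
    then show "e b \<in> k \<and> e b \<in> OK v \<and> vge v (u b - e b) 1"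
      unfolding e_def by (metis (mono_tags, lifting) someI)
  qed
  define lam where "lam = (\<lambda>b. r (e b))"
  have lam_nz: "\<And>b. b \<in> B' \<Longrightarrow> lam b \<noteq> 0"
  proof
    fix b assume b: "b \<in> B'" and l: "lam b = 0"
    have cb: "c b \<noteq> 0" using b unfolding B'_def by auto
    have "vge v (e b) 1" using l e_prop[OF cb] r_zero unfolding lam_def by blast
    hence "vge v (e b + (u b - e b)) 1" using e_prop[OF cb] by (intro vge_add[OF dvf]) auto
    then show False using u_v[OF cb] by (simp add: vge_def)
  qed
  have coef: "r (Acoef (m + D) F j) = (\<Sum>b\<in>B'. lam b * r (Acoef (dfun v k G b + D) b j))" for j
  proof -
    define y where "y = \<pi> powi (int j - (m + D))"
    define T where "T = (\<lambda>b. c b * act G b y / \<pi> ^ j)"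
    define yb where "yb = (\<lambda>b. \<pi> powi (int j - (dfun v k G b + D)))"
    define Rb where "Rb = (\<lambda>b. act G b ((u b - e b) * yb b) / \<pi> ^ j)"
    have A_F: "Acoef (m + D) F j = (\<Sum>b\<in>B. T b)"
      unfolding Acoef_def F_def act_lincomb[OF finB] T_def y_def by (simp add: sum_divide_distrib)
    also have "\<dots> = (\<Sum>b\<in>B'. T b) + (\<Sum>b\<in>B - B'. T b)"
      using finB B'B by (metis sum.subset_diff add.commute)
    finally have A_F2: "Acoef (m + D) F j = (\<Sum>b\<in>B'. T b) + (\<Sum>b\<in>B - B'. T b)" .
    have T_out: "vge v (T b) 1" if b: "b \<in> B - B'" for b
    proof (cases "c b = 0")
      case False
      have bB: "b \<in> B" using b by simp
      have gt: "m + 1 \<le> v (c b) + dfun v k G b" using m_le[OF bB False] b False unfolding B'_def by auto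
      have "vge v (act G b y) (v y + (dfun v k G b + D))" using CC_act[OF dB[OF bB]] pi_nz unfolding y_def by simp
      hence "vge v (c b * act G b y) (v (c b) + (v y + (dfun v k G b + D)))"
        by (intro vge_mult[OF dvf]) (simp_all add: vge_self[OF dvf])
      hence "vge v (c b * act G b y) (1 + v (\<pi> ^ j))"
        by (rule vge_mono[OF dvf]) (use gt in \<open>simp add: y_def v_powi_pi v_pow_pi\<close>)
      then show ?thesis unfolding T_def using pi_nz by (simp add: vge_div_nz[OF dvf])
    qed (simp add: T_def)
    have T_in: "T b = e b * Acoef (dfun v k G b + D) b j + Rb b" if b: "b \<in> B'" for b
    proof -
      have cb: "c b \<noteq> 0" and bm: "v (c b) + dfun v k G b = m" and bB: "b \<in> B" using b unfolding B'_def by auto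
      have ex: "int j - (m + D) = - v (c b) + (int j - (dfun v k G b + D))" using bm by linarith
      have "c b * y = c b * (\<pi> powi (- v (c b)) * \<pi> powi (int j - (dfun v k G b + D)))"
        unfolding y_def ex using power_int_add[OF disjI1[OF pi_nz], of "- v (c b)" "int j - (dfun v k G b + D)"]
        by (simp only:)
      hence "c b * y = u b * yb b" by (simp add: u_def yb_def mult.assoc)
      hence "c b * act G b y = act G b (u b * yb b)"
        using act_scal_x[of "c b" b y] ck bB by simp
      also have "u b * yb b = e b * yb b + (u b - e b) * yb b" by (simp add: algebra_simps)
      also have "act G b \<dots> = e b * act G b (yb b) + act G b ((u b - e b) * yb b)"
        using act_add_x act_scal_x e_prop[OF cb] by simp
      finally show ?thesis unfolding T_def Rb_def Acoef_def yb_def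
        by (simp add: add_divide_distrib)
    qed
    have R_small: "vge v (Rb b) 1" if b: "b \<in> B'" for b
    proof (cases "u b - e b = 0")
      case True then show ?thesis unfolding Rb_def by (simp add: act_zero_x)
    next
      case False
      have cb: "c b \<noteq> 0" and bB: "b \<in> B" using b unfolding B'_def by auto
      have z: "(u b - e b) * yb b \<noteq> 0" using False pi_nz unfolding yb_def by simp
      have vz: "v ((u b - e b) * yb b) \<ge> 1 + (int j - (dfun v k G b + D))"
        using e_prop[OF cb] False pi_nz unfolding yb_def by (simp add: vmult[OF dvf] v_powi_pi vge_def)
      have "vge v (act G b ((u b - e b) * yb b)) (v ((u b - e b) * yb b) + (dfun v k G b + D))"
        using CC_act[OF dB[OF bB] z] .
      hence "vge v (act G b ((u b - e b) * yb b)) (1 + v (\<pi> ^ j))"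
        by (rule vge_mono[OF dvf]) (use vz in \<open>simp add: v_pow_pi\<close>)
      then show ?thesis unfolding Rb_def using pi_nz by (simp add: vge_div_nz[OF dvf])
    qed
    define X where "X = (\<Sum>b\<in>B'. e b * Acoef (dfun v k G b + D) b j)"
    define Y where "Y = (\<Sum>b\<in>B'. Rb b) + (\<Sum>b\<in>B - B'. T b)"
    have AXY: "Acoef (m + D) F j = X + Y"
      unfolding A_F2 X_def Y_def using T_in by (simp add: sum.distrib)
    have XOK: "\<And>b. b \<in> B' \<Longrightarrow> e b * Acoef (dfun v k G b + D) b j \<in> OK v"
    proof -
      fix b assume b: "b \<in> B'"
      have cb: "c b \<noteq> 0" and bB: "b \<in> B" using b unfolding B'_def by auto
      show "e b * Acoef (dfun v k G b + D) b j \<in> OK v"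
        using e_prop[OF cb] Acoef_OK[OF dB[OF bB]] vge_mult[OF dvf, of "e b" 0 _ 0]
        by (simp add: OK_iff)
    qed
    have Yge: "vge v Y 1" unfolding Y_def
      by (intro vge_add[OF dvf] vge_sum[OF dvf]) (auto intro: R_small T_out)
    have XOK': "X \<in> OK v" unfolding X_def OK_iff by (intro vge_sum[OF dvf]) (use XOK in \<open>auto simp: OK_iff\<close>)
    have YOK: "Y \<in> OK v" using Yge vge_mono[OF dvf] by (simp add: OK_iff)
    have "r (Acoef (m + D) F j) = r X + r Y" using AXY r_add[OF XOK' YOK] by simp
    also have "r Y = 0" using Yge r_vanish by blast
    also have "r X = (\<Sum>b\<in>B'. r (e b * Acoef (dfun v k G b + D) b j))"
      unfolding X_def using XOK by (rule r_sum)
    also have "\<dots> = (\<Sum>b\<in>B'. lam b * r (Acoef (dfun v k G b + D) b j))"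
    proof (rule sum.cong)
      fix b assume b: "b \<in> B'"
      have cb: "c b \<noteq> 0" and bB: "b \<in> B" using b unfolding B'_def by auto
      show "r (e b * Acoef (dfun v k G b + D) b j) = lam b * r (Acoef (dfun v k G b + D) b j)"
        unfolding lam_def using r_mult e_prop[OF cb] Acoef_OK[OF dB[OF bB]] by blast
    qed simp
    finally show ?thesis by simp
  qed
  have ppF: "pp v k G \<pi> r (m + D) F = (\<Sum>b\<in>B'. smult (lam b) (frakp v k G \<pi> r b))"
    unfolding pp_Acoef coef frakp_def D_def[symmetric] by (rule poly_combine)
  have Fnot: "F \<notin> CC v G (m + D + 1)"
  proof
    assume "F \<in> CC v G (m + D + 1)"
    hence "pp v k G \<pi> r (m + D) F = 0" using pp_zero by simp
    hence z: "R_eq (card G) (\<Sum>b\<in>B'. smult (lam b) (frakp v k G \<pi> r b)) 0"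
      using ppF by (simp add: R_eq_def)
    have sub: "B' \<subseteq> Bs v k G B m"
    proof
      fix b assume b: "b \<in> B'"
      have cb: "c b \<noteq> 0" and bm: "v (c b) + dfun v k G b = m" and bB: "b \<in> B" using b unfolding B'_def by auto
      obtain t where t: "v (c b) = int (card G) * t" using kval ck bB cb by blast
      have "m mod int (card G) = (dfun v k G b + int (card G) * t) mod int (card G)"
        using bm t by (simp add: add.commute)
      also have "\<dots> = dfun v k G b mod int (card G)" by simp
      finally show "b \<in> Bs v k G B m" unfolding Bs_def using bB by simp
    qed
    have "lam b0 = 0" by (rule indepD[OF finB' sub z b0])
    then show False using lam_nz[OF b0] by simp
  qed
  have dF: "dfun v k G F = m" using FCC Fnot unfolding D_def by (intro dfun_eq) auto
  have Fnz: "F \<noteq> (\<lambda>_. 0)" using Fnot zero_CC by auto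
  have "R_eq (card G) (frakp v k G \<pi> r F) (\<Sum>b\<in>B'. smult (lam b) (frakp v k G \<pi> r b))"
    unfolding frakp_def dF D_def[symmetric] ppF R_eq_def by simp
  then show ?thesis using Fnz dF lam_nz Fnot unfolding F_def D_def by blast
qed

end




lemma H1: fixes n t Dv :: int assumes "n > 0" "Dv \<le> n * t" shows "(Dv - 1) div n + 1 \<le> t"
proof -
  have e: "n * ((Dv - 1) div n) + (Dv - 1) mod n = Dv - 1" by (rule mult_div_mod_eq)
  have "(Dv - 1) mod n \<ge> 0" using assms(1) by simp
  hence "n * ((Dv - 1) div n) < n * t" using assms e by linarith
  hence "(Dv - 1) div n < t" using assms(1) by (simp add: mult_less_cancel_left)
  then show ?thesis by simp
qed

lemma H2: fixes n Dv :: int assumes "n > 0" shows "Dv \<le> n * ((Dv - 1) div n + 1)"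
proof -
  have e: "n * ((Dv - 1) div n) + (Dv - 1) mod n = Dv - 1" by (rule mult_div_mod_eq)
  have "(Dv - 1) mod n < n" using assms by simp
  moreover have "n * ((Dv - 1) div n + 1) = n * ((Dv - 1) div n) + n" by (simp add: algebra_simps)
  ultimately show ?thesis using e by linarith
qed

context tctx begin
lemma pik: "\<pi>k \<in> k" "\<pi>k \<noteq> 0" "v \<pi>k = int (card G)"
  using hyp unfolding tr_context_def by auto
end

context tctxB begin

lemma part2:
  "CC v G i \<inter> {lincomb B c | c. \<forall>b\<in>B. c b \<in> k} =
   {lincomb B c | c. \<forall>b\<in>B. \<exists>y\<in>k \<inter> OK v.
      c b = \<pi>k powi ((i - depth v k G - dfun v k G b - 1) div int (card G) + 1) * y}"
  (is "?L = ?R")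
proof
  define D where "D = depth v k G"
  define eb where "eb = (\<lambda>b. (i - D - dfun v k G b - 1) div int (card G) + 1)"
  have n0: "int (card G) > 0" using cardG by simp
  have vpk: "\<And>z. v (\<pi>k powi z) = z * int (card G)" using vpowi[OF dvf pik(2)] pik(3) by simp
  show "?L \<subseteq> ?R"
  proof
    fix F assume F: "F \<in> ?L"
    then obtain c where Fc: "F = lincomb B c" and ck: "\<forall>b\<in>B. c b \<in> k" and FC: "F \<in> CC v G i" by blast
    have "\<forall>b\<in>B. \<exists>y\<in>k \<inter> OK v. c b = \<pi>k powi (eb b) * y"
    proof
      fix b assume bB: "b \<in> B"
      show "\<exists>y\<in>k \<inter> OK v. c b = \<pi>k powi (eb b) * y"
      proof (cases "c b = 0")
        case True
        then show ?thesis using subfield_closed(1)[OF subk] by (auto simp: OK_iff)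
      next
        case False
        define m where "m = Min {v (c b) + dfun v k G b | b. b \<in> B \<and> c b \<noteq> 0}"
        have p1: "lincomb B c \<notin> CC v G (m + D + 1)"
          using part1[of c] ck bB False unfolding m_def D_def Let_def by blast
        have iM: "i \<le> m + D"
        proof (rule ccontr)
          assume "\<not> i \<le> m + D"
          then show False using p1 FC Fc CC_mono[of "m + D + 1" i F] by simp
        qed
        have fin: "finite {v (c b) + dfun v k G b | b. b \<in> B \<and> c b \<noteq> 0}"
          using finB by (simp add: setcompr_eq_image)
        have "m \<le> v (c b) + dfun v k G b" unfolding m_def using fin bB False by (intro Min_le) auto
        obtain t where t: "v (c b) = int (card G) * t" using kval ck bB False by blast
        have "i - D - dfun v k G b \<le> int (card G) * t" using iM t \<open>m \<le> _\<close> by linarith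
        hence te: "eb b \<le> t" unfolding eb_def using H1[OF n0] by blast
        define y where "y = c b * \<pi>k powi (- eb b)"
        have yk: "y \<in> k" unfolding y_def using ck bB pik(1)
          by (intro subfield_closed(5)[OF subk] subfield_powi[OF subk]) auto
        have "v y = int (card G) * t - eb b * int (card G)"
          unfolding y_def using False pik(2) t by (simp add: vmult[OF dvf] vpk)
        hence "v y = (t - eb b) * int (card G)" by (simp add: algebra_simps)
        moreover have "0 \<le> (t - eb b) * int (card G)" using te n0 by simp
        ultimately have "v y \<ge> 0" by simp
        hence yOK: "y \<in> OK v" by (simp add: OK_iff vge_def)
        have "c b = \<pi>k powi (eb b) * y" unfolding y_def using pik(2)
          by (simp add: power_int_minus field_simps)
        then show ?thesis using yk yOK by blast
      qed
    qed
    then show "F \<in> ?R" unfolding eb_def D_def using Fc by blast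
  qed
  show "?R \<subseteq> ?L"
  proof
    fix F assume "F \<in> ?R"
    then obtain c where Fc: "F = lincomb B c"
      and cy: "\<forall>b\<in>B. \<exists>y\<in>k \<inter> OK v. c b = \<pi>k powi (eb b) * y" unfolding eb_def D_def by blast
    have ck: "\<forall>b\<in>B. c b \<in> k"
      using cy pik(1) by (auto intro!: subfield_closed(5)[OF subk] subfield_powi[OF subk])
    have "F \<in> CC v G i"
      unfolding CC_def
    proof (intro CollectI conjI allI impI)
      have BKG: "B \<subseteq> KG G" using Bsub by auto
      show "F \<in> KG G" unfolding Fc using finB BKG by (rule lincomb_KG)
      fix x :: 'K assume x: "x \<noteq> 0"
      show "vge v (act G F x) (v x + i)"
        unfolding Fc act_lincomb[OF finB]
      proof (rule vge_sum[OF dvf])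
        fix b assume bB: "b \<in> B"
        show "vge v (c b * act G b x) (v x + i)"
        proof (cases "c b = 0")
          case False
          obtain y where y: "y \<in> k" "y \<in> OK v" "c b = \<pi>k powi (eb b) * y" using cy bB by blast
          have y0: "y \<noteq> 0" using y False by auto
          have "v (c b) = eb b * int (card G) + v y"
            using y y0 pik(2) by (simp add: vmult[OF dvf] vpk)
          moreover have "v y \<ge> 0" using y y0 by (simp add: OK_iff vge_def)
          moreover have "i - D - dfun v k G b \<le> int (card G) * eb b" unfolding eb_def using H2[OF n0] by blast
          ultimately have cbv: "i - D - dfun v k G b \<le> v (c b)" by (simp add: algebra_simps)
          have "vge v (c b * act G b x) (v (c b) + (v x + (dfun v k G b + D)))"
            using CC_act[OF conjunct1[OF dfunB[OF bB]] x] unfolding D_def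
            by (intro vge_mult[OF dvf]) (simp_all add: vge_self[OF dvf])
          then show ?thesis by (rule vge_mono[OF dvf]) (use cbv in linarith)
        qed simp
      qed
    qed
    then show "F \<in> ?L" using Fc ck by blast
  qed
qed

lemma part3:
  assumes cB: "card B = card G" and BkG: "B \<subseteq> kG k G"
  shows "graded_base v k G \<pi> r B"
  unfolding graded_base_def
proof (intro conjI)
  show "B \<subseteq> kG k G" by fact
  show "graded_indep v k G \<pi> r B" by (rule indep)
  have BKG: "B \<subseteq> KG G" using Bsub by auto
  have bk: "\<And>b \<sigma>. b \<in> B \<Longrightarrow> b \<sigma> \<in> k" using BkG unfolding kG_def by blast
  show "kspan k B = kG k G"
  proof
    show "kspan k B \<subseteq> kG k G"
    proof
      fix f assume "f \<in> kspan k B"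
      then obtain S c where f: "f = lincomb S c" "finite S" "S \<subseteq> B" "\<forall>b\<in>S. c b \<in> k"
        unfolding kspan_def by blast
      have "f \<in> KG G" unfolding f(1) using f(2) f(3) BKG by (intro lincomb_KG) auto
      moreover have "\<forall>\<sigma>. f \<sigma> \<in> k" unfolding f(1) lincomb_def
        using f bk by (auto intro!: subfield_sum[OF subk] subfield_closed(5)[OF subk])
      ultimately show "f \<in> kG k G" unfolding kG_def by blast
    qed
    show "kG k G \<subseteq> kspan k B"
    proof
      fix g assume g: "g \<in> kG k G"
      define J where "J = insert None (Some ` B)"
      define a where "a = (\<lambda>\<sigma> j. case j of None \<Rightarrow> g \<sigma> | Some b \<Rightarrow> b \<sigma>)"
      have finJ: "finite J" unfolding J_def using finB by simp
      have cJ: "card J = card B + 1" unfolding J_def using finB by (simp add: card_image)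
      have aF: "\<forall>\<sigma>\<in>G. \<forall>j\<in>J. a \<sigma> j \<in> k" unfolding a_def J_def using g bk unfolding kG_def by auto
      obtain y where y: "\<forall>j\<in>J. y j \<in> k" "\<exists>j\<in>J. y j \<noteq> 0" "\<forall>\<sigma>\<in>G. (\<Sum>j\<in>J. a \<sigma> j * y j) = 0"
        using lin_sys[OF subk finG finJ _ aF] cJ cB by auto
      have sumJ: "\<And>\<sigma>. (\<Sum>j\<in>J. a \<sigma> j * y j) = g \<sigma> * y None + (\<Sum>b\<in>B. b \<sigma> * y (Some b))"
        unfolding J_def a_def using finB by (simp add: sum.reindex)
      have gKG: "\<And>\<sigma>. \<sigma> \<notin> G \<Longrightarrow> g \<sigma> = 0" using g unfolding kG_def KG_def by blast
      have bKG: "\<And>\<sigma> b. \<sigma> \<notin> G \<Longrightarrow> b \<in> B \<Longrightarrow> b \<sigma> = 0" using BKG unfolding KG_def by blast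
      show "g \<in> kspan k B"
      proof (cases "y None = 0")
        case True
        define c where "c = (\<lambda>b. y (Some b))"
        have ck: "\<forall>b\<in>B. c b \<in> k" using y(1) unfolding c_def J_def by auto
        have cnz: "\<exists>b\<in>B. c b \<noteq> 0" using y(2) True unfolding c_def J_def by auto
        have "lincomb B c = (\<lambda>_. 0)"
        proof
          fix \<sigma>
          show "lincomb B c \<sigma> = 0"
          proof (cases "\<sigma> \<in> G")
            case True
            then show ?thesis using y(3) sumJ[of \<sigma>] \<open>y None = 0\<close>
              unfolding lincomb_def c_def by (simp add: mult.commute)
          next
            case False
            then show ?thesis unfolding lincomb_def using bKG by (auto intro!: sum.neutral)
          qed
        qed
        then show ?thesis using part1[OF ck cnz] by (simp add: Let_def)
      next
        case False
        define c where "c = (\<lambda>b. - y (Some b) / y None)"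
        have ck: "\<forall>b\<in>B. c b \<in> k" using y(1) unfolding c_def J_def
          by (auto intro!: subfield_divide[OF subk] subfield_uminus[OF subk])
        have "g = lincomb B c"
        proof
          fix \<sigma>
          show "g \<sigma> = lincomb B c \<sigma>"
          proof (cases "\<sigma> \<in> G")
            case True
            have "g \<sigma> * y None = - (\<Sum>b\<in>B. b \<sigma> * y (Some b))"
              using y(3) sumJ[of \<sigma>] True by (simp add: eq_neg_iff_add_eq_0)
            hence "g \<sigma> = - (\<Sum>b\<in>B. b \<sigma> * y (Some b)) / y None" using False by (simp add: field_simps)
            also have "\<dots> = lincomb B c \<sigma>" unfolding lincomb_def c_def
              by (simp add: sum_divide_distrib sum_negf[symmetric] algebra_simps)
            finally show ?thesis .
          next
            case False
            have "lincomb B c \<sigma> = 0" unfolding lincomb_def using bKG False by (auto intro!: sum.neutral)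
            then show ?thesis using gKG False by simp
          qed
        qed
        then show ?thesis unfolding kspan_def using finB ck by blast
      qed
    qed
  qed
qed

end



theorem proposition3p1p2:
  fixes v :: "'K::field \<Rightarrow> int" and k :: "'K set" and G :: "('K \<Rightarrow> 'K) set"
    and \<pi> \<pi>k :: 'K and r :: "'K \<Rightarrow> 'r::field"
    and B :: "(('K \<Rightarrow> 'K) \<Rightarrow> 'K) set"
  assumes hyp: "tr_context v k G \<pi> \<pi>k r"
    and finB: "finite B"
    and Bsub: "B \<subseteq> KG G - {\<lambda>_. 0}"
    and indep: "graded_indep v k G \<pi> r B"
  shows
   "(\<forall>c. (\<forall>b\<in>B. c b \<in> k) \<and> (\<exists>b\<in>B. c b \<noteq> 0) \<longrightarrow>
       (let m = Min {v (c b) + dfun v k G b | b. b \<in> B \<and> c b \<noteq> 0};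
            B' = {b \<in> B. c b \<noteq> 0 \<and> v (c b) + dfun v k G b = m}
        in lincomb B c \<noteq> (\<lambda>_. 0) \<and> dfun v k G (lincomb B c) = m \<and>
           (\<exists>lam::(('K \<Rightarrow> 'K) \<Rightarrow> 'K) \<Rightarrow> 'r. (\<forall>b\<in>B'. lam b \<noteq> 0) \<and>
              R_eq (card G) (frakp v k G \<pi> r (lincomb B c))
                 (\<Sum>b\<in>B'. smult (lam b) (frakp v k G \<pi> r b)))))
    \<and> (\<forall>i::int. CC v G i \<inter> {lincomb B c | c. \<forall>b\<in>B. c b \<in> k} =
         {lincomb B c | c. \<forall>b\<in>B. \<exists>y\<in>k \<inter> OK v.
            c b = \<pi>k powi ((i - depth v k G - dfun v k G b - 1) div int (card G) + 1) * y})
    \<and> (card B = card G \<and> B \<subseteq> kG k G \<longrightarrow> graded_base v k G \<pi> r B)"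
proof -
  interpret tctxB v k G \<pi> \<pi>k r B
    using hyp finB Bsub indep by (simp add: tctxB_def tctx_def tctxB_axioms_def)
  show ?thesis
    apply (intro conjI allI impI)
    subgoal for c using part1[of c] unfolding Let_def by blast
    subgoal for i by (rule part2)
    subgoal using part3 by blast
    done
qed

end
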